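(* Let $E$ and $F$ be Banach spaces and let $T:E\to F$ be a coarse $(M,L)$-quasi isometry, with $\xi>0$ such that $T(E)$ is $\xi$-dense in $F$. Then there exists a bijective coarse $\big(M,(4M^2+3)L+4\xi\big)$-quasi isometry $\widetilde{T}:E\to F$ such that $\|\widetilde{T}x-Tx\|\le(2M^2+2)L+2\xi$ for all $x\in E$.
   Context: A set $S$ is $\xi$-dense in $F$ if every point of $F$ is at distance at most $\xi$ from some point of $S$. A map $T:E\to F$ between metric spaces is a coarse $(M,L)$-quasi isometry (with $M>0$, $L\ge0$) if $\frac{1}{M}d_E(x,y)-L\le d_F(Tx,Ty)\le M d_E(x,y)+L$ for all $x,y\in E$ and $T(E)$ is $\xi'$-dense in $F$ for some $\xi'>0$. *)

theory Defs
  imports "HOL-Analysis.Analysis"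
begin

definition xi_dense :: "real \<Rightarrow> 'a::metric_space set \<Rightarrow> 'a set \<Rightarrow> bool" where
  "xi_dense \<xi> S F \<longleftrightarrow> (\<forall>y\<in>F. \<exists>x\<in>S. dist y x \<le> \<xi>)"

definition coarse_qi :: "real \<Rightarrow> real \<Rightarrow> ('a::metric_space \<Rightarrow> 'b::metric_space) \<Rightarrow> bool" where
  "coarse_qi M L T \<longleftrightarrow> M > 0 \<and> L \<ge> 0 \<and>
     (\<forall>x y. (1 / M) * dist x y - L \<le> dist (T x) (T y) \<and> dist (T x) (T y) \<le> M * dist x y + L) \<and>
     (\<exists>\<xi>'>0. xi_dense \<xi>' (range T) UNIV)"

end

theory Submission
  imports Defs
begin


lemma SB_close:
  fixes f :: "'a \<Rightarrow> 'b" and g :: "'b \<Rightarrow> 'a"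
  assumes inj1: "inj f" and inj2: "inj g"
    and Pf: "\<And>x. P x (f x)" and Pg: "\<And>y. P (g y) y"
  shows "\<exists>h. bij h \<and> (\<forall>x. P x (h x))"
proof -
  define X where "X = lfp (\<lambda>X. UNIV - (g ` (UNIV - (f ` X))))"
  define g' where "g' = the_inv_into (UNIV - (f ` X)) g"
  let ?h = "\<lambda>z. if z \<in> X then f z else g' z"
  have X: "X = UNIV - (g ` (UNIV - (f ` X)))"
    unfolding X_def by (rule lfp_unfold) (blast intro: monoI)
  then have X_compl: "UNIV - X = g ` (UNIV - (f ` X))" by blast
  from inj2 have inj2': "inj_on g (UNIV - (f ` X))"
    by (rule inj_on_subset) auto
  with X_compl have *: "g' ` (UNIV - X) = UNIV - (f ` X)"
    by (simp add: g'_def)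
  have gg: "g (g' z) = z" if "z \<notin> X" for z
  proof -
    from that X_compl obtain w where w: "w \<in> UNIV - f ` X" "z = g w" by blast
    then have "g' z = w" unfolding g'_def using inj2' by (simp add: the_inv_into_f_f)
    with w show ?thesis by simp
  qed
  have "bij_betw ?h UNIV UNIV"
  proof (rule bij_betw_imageI)
    show "?h ` UNIV = UNIV"
    proof -
      have "?h ` UNIV = ?h ` (X \<union> (UNIV - X))" by auto
      also have "\<dots> = ?h ` X \<union> ?h ` (UNIV - X)" by (simp only: image_Un)
      also have "?h ` X = f ` X" by auto
      also from * have "?h ` (UNIV - X) = UNIV - (f ` X)" by auto
      finally show ?thesis by blast
    qed
    show "inj_on ?h UNIV"
    proof (rule inj_onI)
      fix a b assume h: "?h a = ?h b" and "a \<in> UNIV" "b \<in> UNIV"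
      show "a = b"
      proof (cases "a \<in> X"; cases "b \<in> X")
        assume "a \<in> X" "b \<in> X" then show ?thesis using h inj1 by (auto dest: injD)
      next
        assume a: "a \<notin> X" "b \<notin> X"
        then have "g (g' a) = g (g' b)" using h by simp
        then show ?thesis using gg a by metis
      next
        assume a: "a \<in> X" "b \<notin> X"
        then have "g' b \<in> UNIV - f ` X" using * by blast
        moreover have "f a = g' b" using h a by simp
        ultimately show ?thesis using a by (metis DiffD2 imageI)
      next
        assume a: "a \<notin> X" "b \<in> X"
        then have "g' a \<in> UNIV - f ` X" using * by blast
        moreover have "f b = g' a" using h a by simp
        ultimately show ?thesis using a by (metis DiffD2 imageI)
      qed
    qed
  qed
  moreover have "P x (?h x)" for x
  proof (cases "x \<in> X")
    case True then show ?thesis using Pf by simp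
  next
    case False then show ?thesis using Pg[of "g' x"] gg[OF False] by simp
  qed
  ultimately show ?thesis by blast
qed

lemma maximal_sep:
  fixes \<delta> :: real assumes "\<delta> > 0"
  shows "\<exists>D::'a::metric_space set. (\<forall>a\<in>D. \<forall>b\<in>D. a \<noteq> b \<longrightarrow> \<delta> \<le> dist a b) \<and> (\<forall>x. \<exists>d\<in>D. dist x d < \<delta>)"
proof -
  define A where "A = {S::'a set. \<forall>a\<in>S. \<forall>b\<in>S. a \<noteq> b \<longrightarrow> \<delta> \<le> dist a b}"
  have "\<forall>C\<in>chains A. \<Union>C \<in> A"
  proof
    fix C assume C: "C \<in> chains A"
    show "\<Union>C \<in> A" unfolding A_def
    proof (intro CollectI ballI impI)
      fix a b assume "a \<in> \<Union>C" "b \<in> \<Union>C" "a \<noteq> b"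
      then obtain S1 S2 where S: "S1 \<in> C" "S2 \<in> C" "a \<in> S1" "b \<in> S2" by blast
      from C S have "S1 \<subseteq> S2 \<or> S2 \<subseteq> S1" unfolding chains_def chain_subset_def by blast
      moreover have "S1 \<in> A" "S2 \<in> A" using C S unfolding chains_def by auto
      ultimately show "\<delta> \<le> dist a b" using S \<open>a \<noteq> b\<close> unfolding A_def by blast
    qed
  qed
  from Zorn_Lemma[OF this] obtain D where D: "D \<in> A" and mx: "\<forall>X\<in>A. D \<subseteq> X \<longrightarrow> X = D" by blast
  have "\<exists>d\<in>D. dist x d < \<delta>" for x
  proof (rule ccontr)
    assume "\<not> ?thesis"
    then have "insert x D \<in> A" using D unfolding A_def by (auto simp: dist_commute not_less)
    then have "insert x D = D" using mx by blast
    then have "x \<in> D" by blast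
    with \<open>\<not> ?thesis\<close> assms show False by force
  qed
  with D show ?thesis unfolding A_def by blast
qed

lemma ball_inj:
  fixes c :: "'b::real_normed_vector" and \<rho> :: real
  assumes "\<rho> > 0"
  shows "inj (\<lambda>y. c + (\<rho> / (1 + norm y)) *\<^sub>R y) \<and> (\<forall>y. norm (c + (\<rho> / (1 + norm y)) *\<^sub>R y - c) < \<rho>)"
proof
  show "inj (\<lambda>y. c + (\<rho> / (1 + norm y)) *\<^sub>R y)"
  proof (rule injI)
    fix y z assume "c + (\<rho> / (1 + norm y)) *\<^sub>R y = c + (\<rho> / (1 + norm z)) *\<^sub>R z"
    then have e: "(\<rho> / (1 + norm y)) *\<^sub>R y = (\<rho> / (1 + norm z)) *\<^sub>R z" by simp
    then have "norm ((\<rho> / (1 + norm y)) *\<^sub>R y) = norm ((\<rho> / (1 + norm z)) *\<^sub>R z)" by simp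
    then have "\<rho> * norm y / (1 + norm y) = \<rho> * norm z / (1 + norm z)" using assms by simp
    then have "norm y / (1 + norm y) = norm z / (1 + norm z)" using assms
      by (metis mult_left_cancel order_less_irrefl times_divide_eq_right)
    moreover have "1 + norm y > 0" "1 + norm z > 0" by (simp_all add: add_pos_nonneg)
    ultimately have "norm y * (1 + norm z) = norm z * (1 + norm y)"
      by (simp add: field_simps)
    then have "norm y = norm z" by (simp add: algebra_simps)
    with e assms show "y = z" by (smt (verit) norm_ge_zero scaleR_cancel_left divide_eq_0_iff)
  qed
  show "\<forall>y. norm (c + (\<rho> / (1 + norm y)) *\<^sub>R y - c) < \<rho>"
  proof
    fix y :: 'b
    have "norm (c + (\<rho> / (1 + norm y)) *\<^sub>R y - c) = \<rho> * (norm y / (1 + norm y))"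
      using assms by (simp add: add_pos_nonneg)
    also have "\<dots> < \<rho> * 1"
    proof (rule mult_strict_left_mono[OF _ assms])
      show "norm y / (1 + norm y) < 1" by (smt (verit) norm_ge_zero divide_less_eq_1_pos)
    qed
    finally show "norm (c + (\<rho> / (1 + norm y)) *\<^sub>R y - c) < \<rho>" by simp
  qed
qed



definition enc_e :: "'b::real_normed_vector \<Rightarrow> 'b" where
  "enc_e y = (1 / (1 + norm y)) *\<^sub>R y"
definition enc_c :: "'b::real_normed_vector \<Rightarrow> real" where
  "enc_c y = 1 / (16 * (1 + norm y)^2)"
definition enc_t :: "(nat \<Rightarrow> 'b::real_normed_vector) \<Rightarrow> nat \<Rightarrow> 'b" where
  "enc_t \<sigma> k = (\<Prod>j<k. enc_c (\<sigma> j)) *\<^sub>R enc_e (\<sigma> k)"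
definition enc :: "(nat \<Rightarrow> 'b::banach) \<Rightarrow> 'b" where
  "enc \<sigma> = suminf (enc_t \<sigma>)"

lemma enc_c_bounds: "0 < enc_c y" "enc_c y \<le> 1/16"
proof -
  have "1 \<le> 1 + norm y" by simp
  then have "1 \<le> (1 + norm y)^2" by (simp add: one_le_power)
  then show "0 < enc_c y" unfolding enc_c_def by (smt (verit) divide_pos_pos)
  show "enc_c y \<le> 1/16" unfolding enc_c_def
  proof (rule divide_left_mono)
    show "16 \<le> 16*(1+norm y)^2" using \<open>1 \<le> (1 + norm y)^2\<close> by simp
    show "0 \<le> (1::real)" by simp
    show "0 < 16*(1+norm y)^2 * 16" using \<open>1 \<le> (1 + norm y)^2\<close> by linarith
  qed
qed

lemma enc_e_norm: "norm (enc_e y) \<le> 1"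
proof -
  have "norm (enc_e y) = norm y / (1 + norm y)" unfolding enc_e_def
    by (simp add: add_pos_nonneg)
  also have "\<dots> \<le> 1" by (simp add: divide_le_eq_1 add_pos_nonneg)
  finally show ?thesis .
qed

lemma enc_t_norm: "norm (enc_t \<sigma> k) \<le> (1/2)^k"
proof -
  have p: "0 \<le> (\<Prod>j<k. enc_c (\<sigma> j))" by (intro prod_nonneg ballI less_imp_le enc_c_bounds)
  have "(\<Prod>j<k. enc_c (\<sigma> j)) \<le> (\<Prod>j<k. 1/2)"
  proof (rule prod_mono)
    fix i show "0 \<le> enc_c (\<sigma> i) \<and> enc_c (\<sigma> i) \<le> 1/2"
      using enc_c_bounds[of "\<sigma> i"] by linarith
  qed
  then have "(\<Prod>j<k. enc_c (\<sigma> j)) \<le> (1/2)^k" by simp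
  moreover have "norm (enc_t \<sigma> k) = (\<Prod>j<k. enc_c (\<sigma> j)) * norm (enc_e (\<sigma> k))"
    unfolding enc_t_def using p by simp
  ultimately show ?thesis using enc_e_norm[of "\<sigma> k"] p
    by (smt (verit) mult_left_le mult_right_mono zero_le_power norm_ge_zero)
qed

lemma enc_summable: "summable (\<lambda>k. norm (enc_t \<sigma> k))"
  by (rule summable_comparison_test[where g="\<lambda>k. (1/2::real)^k"])
     (use enc_t_norm in auto)

lemma enc_norm: "norm (enc \<sigma>) \<le> 2"
proof -
  have "norm (enc \<sigma>) \<le> (\<Sum>k. norm (enc_t \<sigma> k))"
    unfolding enc_def by (rule summable_norm[OF enc_summable])
  also have "\<dots> \<le> (\<Sum>k. (1/2::real)^k)"
    by (rule suminf_le) (use enc_t_norm enc_summable in auto)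
  also have "\<dots> = 2" by (simp add: suminf_geometric)
  finally show ?thesis .
qed

lemma enc_shift: "enc \<sigma> = enc_e (\<sigma> 0) + enc_c (\<sigma> 0) *\<^sub>R enc (\<lambda>k. \<sigma> (Suc k))"
proof -
  have s: "summable (enc_t \<sigma>)" by (rule summable_norm_cancel[OF enc_summable])
  have s2: "summable (enc_t (\<lambda>k. \<sigma> (Suc k)))" by (rule summable_norm_cancel[OF enc_summable])
  have t: "enc_t \<sigma> (Suc k) = enc_c (\<sigma> 0) *\<^sub>R enc_t (\<lambda>k. \<sigma> (Suc k)) k" for k
    unfolding enc_t_def prod.lessThan_Suc_shift by (simp del: prod.lessThan_Suc)
  have "(\<Sum>k. enc_t \<sigma> (Suc k)) = enc \<sigma> - enc_t \<sigma> 0"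
    unfolding enc_def by (rule suminf_split_head[OF s])
  moreover have "(\<Sum>k. enc_t \<sigma> (Suc k)) = enc_c (\<sigma> 0) *\<^sub>R enc (\<lambda>k. \<sigma> (Suc k))"
    unfolding t enc_def by (rule suminf_scaleR_right[OF s2, symmetric])
  moreover have "enc_t \<sigma> 0 = enc_e (\<sigma> 0)" unfolding enc_t_def by simp
  ultimately show ?thesis by (metis add_diff_cancel_left' diff_add_cancel add.commute)
qed


lemma frac_aux:
  fixes p q :: real assumes "0 < p" "0 < q"
  shows "1 / (8 * p^2) + 1 / (8 * q^2) = (q/(8*p) + p/(8*q)) / (p*q)"
  using assms by (simp add: field_simps power2_eq_square)

lemma sep_aux:
  fixes d d' :: "'b::real_normed_vector"
  assumes ab: "norm d \<le> norm d'" and sep: "1 \<le> norm (d - d')"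
  shows "1 / (8 * (1 + norm d)^2) + 1 / (8 * (1 + norm d')^2) < norm (enc_e d - enc_e d')"
proof -
  define a where "a = norm d"
  define b where "b = norm d'"
  have a0: "0 \<le> a" and ab': "a \<le> b" using ab by (auto simp: a_def b_def)
  define N where "N = norm ((1+b) *\<^sub>R d - (1+a) *\<^sub>R d')"
  have eq: "(1+b) *\<^sub>R d - (1+a) *\<^sub>R d' = (1+a) *\<^sub>R (d - d') + (b-a) *\<^sub>R d"
    by (simp add: algebra_simps)
  have t1: "1 \<le> norm (d - d')" by (rule sep)
  have t2: "b - a \<le> norm (d - d')" unfolding a_def b_def
    by (metis norm_minus_commute norm_triangle_ineq2)
  have "N \<ge> norm ((1+a) *\<^sub>R (d - d')) - norm ((b-a) *\<^sub>R d)"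
    unfolding N_def eq by (rule norm_diff_ineq)
  also have "norm ((1+a) *\<^sub>R (d - d')) = (1+a) * norm (d - d')" using a0 by simp
  also have "norm ((b-a) *\<^sub>R d) = (b - a) * a" using ab' by (simp add: a_def)
  finally have N1: "(1+a) * norm (d - d') - (b-a) * a \<le> N" .
  have "(1+a) * 1 \<le> (1+a) * norm (d - d')" using t1 a0 by (intro mult_left_mono) auto
  moreover have "(1+a) * (b-a) \<le> (1+a) * norm (d - d')" using t2 a0 by (intro mult_left_mono) auto
  moreover have "(1+a)*(b-a) - (b-a)*a = b - a" by (simp add: algebra_simps)
  ultimately have Nm2: "b - a \<le> N" using N1 by linarith
  have N1': "1 \<le> N"
  proof (cases "b - a \<le> 1")
    case True
    then have "(b-a) * a \<le> 1 * a" using a0 by (intro mult_right_mono) auto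
    then show ?thesis using N1 \<open>(1+a) * 1 \<le> (1+a) * norm (d - d')\<close> by simp
  next
    case False then show ?thesis using Nm2 by simp
  qed
  have pa: "0 < 1 + a" and pb: "0 < 1 + b" using a0 ab' by auto
  have c1: "1/((1+a)*(1+b)) * (1+b) = 1/(1+a)" using pa pb by simp
  have c2: "1/((1+a)*(1+b)) * (1+a) = 1/(1+b)" using pa pb by simp
  have ee: "enc_e d - enc_e d' = (1 / ((1+a)*(1+b))) *\<^sub>R ((1+b) *\<^sub>R d - (1+a) *\<^sub>R d')"
    unfolding scaleR_diff_right scaleR_scaleR c1 c2 by (simp add: enc_e_def a_def b_def)
  have nee: "norm (enc_e d - enc_e d') = N / ((1+a)*(1+b))"
    unfolding ee N_def using pa pb by simp
  have q1: "(1+a)/(1+b) \<le> 1" using pa pb ab' by simp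
  have q2: "(1+b)/(1+a) \<le> 1 + (b - a)"
  proof -
    have "1 + b \<le> (1+a) * (1 + (b-a))" using a0 ab' mult_left_mono[OF ab' a0] by (simp add: algebra_simps)
    then show ?thesis using pa by (simp add: divide_simps mult.commute)
  qed
  have key: "(1+b)/(8*(1+a)) + (1+a)/(8*(1+b)) < N"
  proof -
    have "(1+b)/(8*(1+a)) + (1+a)/(8*(1+b)) = ((1+b)/(1+a))/8 + ((1+a)/(1+b))/8" by (simp add: mult.commute)
    also have "\<dots> = ((1+b)/(1+a) + (1+a)/(1+b))/8" by (simp add: add_divide_distrib)
    also have "\<dots> \<le> (2 + (b-a))/8" by (rule divide_right_mono) (use q1 q2 in linarith, simp)
    also have "\<dots> < N"
    proof -
      have "2 + (b-a) < N*8" using N1' Nm2 by linarith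
      then show ?thesis by (simp add: pos_divide_less_eq)
    qed
    finally show ?thesis .
  qed
  have "1 / (8 * (1 + a)^2) + 1 / (8 * (1 + b)^2) = ((1+b)/(8*(1+a)) + (1+a)/(8*(1+b))) / ((1+a)*(1+b))"
    using frac_aux[OF pa pb] .
  also have "\<dots> < N / ((1+a)*(1+b))" using key pa pb by (simp add: divide_strict_right_mono)
  finally show ?thesis using nee by (simp add: a_def b_def)
qed


lemma sep_enc:
  fixes d d' :: "'b::real_normed_vector"
  assumes sep: "1 \<le> norm (d - d')"
  shows "2 * enc_c d + 2 * enc_c d' < norm (enc_e d - enc_e d')"
proof -
  have e: "2 * enc_c y = 1 / (8 * (1 + norm y)^2)" for y :: 'b unfolding enc_c_def by simp
  show ?thesis
  proof (cases "norm d \<le> norm d'")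
    case True then show ?thesis using sep_aux[OF True sep] by (simp add: e)
  next
    case False
    have "1 \<le> norm (d' - d)" using sep by (simp add: norm_minus_commute)
    from sep_aux[OF _ this] False show ?thesis by (simp add: e norm_minus_commute add.commute)
  qed
qed


lemma enc_tail: "norm (enc \<sigma> - enc_e (\<sigma> 0)) \<le> 2 * enc_c (\<sigma> 0)"
proof -
  have "enc \<sigma> - enc_e (\<sigma> 0) = enc_c (\<sigma> 0) *\<^sub>R enc (\<lambda>k. \<sigma> (Suc k))"
    using enc_shift[of \<sigma>] by (simp add: algebra_simps)
  then have "norm (enc \<sigma> - enc_e (\<sigma> 0)) = enc_c (\<sigma> 0) * norm (enc (\<lambda>k. \<sigma> (Suc k)))"
    using enc_c_bounds(1)[of "\<sigma> 0"] by simp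
  also have "\<dots> \<le> enc_c (\<sigma> 0) * 2"
    by (rule mult_left_mono[OF enc_norm]) (use enc_c_bounds(1)[of "\<sigma> 0"] in simp)
  finally show ?thesis by simp
qed

lemma enc_first:
  fixes D :: "'b::banach set"
  assumes D: "\<forall>a\<in>D. \<forall>b\<in>D. a \<noteq> b \<longrightarrow> 1 \<le> dist a b"
    and s: "\<forall>k. \<sigma> k \<in> D" and t: "\<forall>k. \<tau> k \<in> D" and e: "enc \<sigma> = enc \<tau>"
  shows "\<sigma> 0 = \<tau> 0"
proof (rule ccontr)
  assume ne: "\<sigma> 0 \<noteq> \<tau> 0"
  have "\<sigma> 0 \<in> D" "\<tau> 0 \<in> D" using s t by auto
  then have "1 \<le> dist (\<sigma> 0) (\<tau> 0)" using D ne by auto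
  then have "1 \<le> norm (\<sigma> 0 - \<tau> 0)" by (simp add: dist_norm)
  from sep_enc[OF this] have lt: "2 * enc_c (\<sigma> 0) + 2 * enc_c (\<tau> 0) < norm (enc_e (\<sigma> 0) - enc_e (\<tau> 0))" .
  have b1: "norm (enc \<sigma> - enc_e (\<sigma> 0)) \<le> 2 * enc_c (\<sigma> 0)"
    by (rule enc_tail)
  have b2: "norm (enc \<tau> - enc_e (\<tau> 0)) \<le> 2 * enc_c (\<tau> 0)"
    by (rule enc_tail)
  have "enc_e (\<sigma> 0) - enc_e (\<tau> 0) = (enc \<tau> - enc_e (\<tau> 0)) - (enc \<sigma> - enc_e (\<sigma> 0))"
    using e by simp
  then have "norm (enc_e (\<sigma> 0) - enc_e (\<tau> 0)) \<le> norm (enc \<tau> - enc_e (\<tau> 0)) + norm (enc \<sigma> - enc_e (\<sigma> 0))"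
    by (metis norm_triangle_ineq4)
  with lt b1 b2 show False by linarith
qed

lemma enc_inj:
  fixes D :: "'b::banach set"
  assumes D: "\<forall>a\<in>D. \<forall>b\<in>D. a \<noteq> b \<longrightarrow> 1 \<le> dist a b"
  shows "\<forall>\<sigma> \<tau>. (\<forall>k. \<sigma> k \<in> D) \<longrightarrow> (\<forall>k. \<tau> k \<in> D) \<longrightarrow> enc \<sigma> = enc \<tau> \<longrightarrow> \<sigma> n = \<tau> n"
proof (induction n)
  case 0 show ?case using enc_first[OF D] by blast
next
  case (Suc n)
  show ?case
  proof (intro allI impI)
    fix \<sigma> \<tau> :: "nat \<Rightarrow> 'b" assume s: "\<forall>k. \<sigma> k \<in> D" and t: "\<forall>k. \<tau> k \<in> D" and e: "enc \<sigma> = enc \<tau>"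
    have f: "\<sigma> 0 = \<tau> 0" using enc_first[OF D s t e] .
    have "enc_e (\<sigma> 0) + enc_c (\<sigma> 0) *\<^sub>R enc (\<lambda>k. \<sigma> (Suc k)) = enc_e (\<tau> 0) + enc_c (\<tau> 0) *\<^sub>R enc (\<lambda>k. \<tau> (Suc k))"
      using e enc_shift[of \<sigma>] enc_shift[of \<tau>] by (simp only:)
    then have "enc_c (\<sigma> 0) *\<^sub>R enc (\<lambda>k. \<sigma> (Suc k)) = enc_c (\<sigma> 0) *\<^sub>R enc (\<lambda>k. \<tau> (Suc k))"
      using f by simp
    then have "enc (\<lambda>k. \<sigma> (Suc k)) = enc (\<lambda>k. \<tau> (Suc k))"
      using enc_c_bounds(1)[of "\<sigma> 0"] by simp
    moreover have "\<forall>k. \<sigma> (Suc k) \<in> D" "\<forall>k. \<tau> (Suc k) \<in> D" using s t by auto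
    ultimately show "\<sigma> (Suc n) = \<tau> (Suc n)"
      using Suc.IH[rule_format, of "\<lambda>k. \<sigma> (Suc k)" "\<lambda>k. \<tau> (Suc k)"] by simp
  qed
qed



lemma coarse_inj:
  fixes \<phi> :: "'a::real_normed_vector \<Rightarrow> 'b::banach" and K C :: real
  assumes K: "K > 0" and lb: "\<forall>x y. dist x y \<le> K * dist (\<phi> x) (\<phi> y) + C"
  shows "\<exists>\<iota>::'a \<Rightarrow> 'b. inj \<iota>"
proof -
  obtain D :: "'b set" where Dsep: "\<forall>a\<in>D. \<forall>b\<in>D. a \<noteq> b \<longrightarrow> 1 \<le> dist a b"
    and Dnet: "\<forall>x. \<exists>d\<in>D. dist x d < 1"
    using maximal_sep[of 1] by auto
  define \<pi> where "\<pi> y = (SOME d. d \<in> D \<and> dist y d < 1)" for y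
  have \<pi>: "\<pi> y \<in> D \<and> dist y (\<pi> y) < 1" for y
    unfolding \<pi>_def by (rule someI_ex) (use Dnet in blast)
  define \<sigma> where "\<sigma> x = (\<lambda>k. \<pi> (\<phi> ((2^k) *\<^sub>R x)))" for x
  have "inj (\<lambda>x. enc (\<sigma> x))"
  proof (rule injI)
    fix x x' assume e: "enc (\<sigma> x) = enc (\<sigma> x')"
    have sx: "\<forall>k. \<sigma> x k \<in> D" "\<forall>k. \<sigma> x' k \<in> D" unfolding \<sigma>_def using \<pi> by auto
    have eq: "\<sigma> x k = \<sigma> x' k" for k
      using enc_inj[OF Dsep, of k, rule_format, of "\<sigma> x" "\<sigma> x'"] sx e by simp
    have bnd: "(2^k) * norm (x - x') \<le> K * 2 + C" for k :: nat
    proof -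
      have "dist (\<phi> ((2^k) *\<^sub>R x)) (\<phi> ((2^k) *\<^sub>R x')) \<le> dist (\<phi> ((2^k) *\<^sub>R x)) (\<sigma> x k) + dist (\<sigma> x' k) (\<phi> ((2^k) *\<^sub>R x'))"
        using eq[of k] dist_triangle[of "\<phi> ((2^k) *\<^sub>R x)" "\<phi> ((2^k) *\<^sub>R x')" "\<sigma> x k"]
        by (simp add: dist_commute)
      also have "\<dots> < 2" using \<pi>[of "\<phi> ((2^k) *\<^sub>R x)"] \<pi>[of "\<phi> ((2^k) *\<^sub>R x')"]
        unfolding \<sigma>_def by (simp add: dist_commute)
      finally have "dist (\<phi> ((2^k) *\<^sub>R x)) (\<phi> ((2^k) *\<^sub>R x')) < 2" .
      moreover have "dist ((2^k) *\<^sub>R x) ((2^k) *\<^sub>R x') = (2^k) * norm (x - x')"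
        by (simp add: dist_norm scaleR_diff_right[symmetric])
      moreover have "K * dist (\<phi> ((2^k) *\<^sub>R x)) (\<phi> ((2^k) *\<^sub>R x')) \<le> K * 2"
        by (rule mult_left_mono) (use calculation K in auto)
      ultimately show ?thesis using lb[rule_format, of "(2^k) *\<^sub>R x" "(2^k) *\<^sub>R x'"]
        by linarith
    qed
    show "x = x'"
    proof (rule ccontr)
      assume "x \<noteq> x'"
      then have p: "norm (x - x') > 0" by simp
      obtain k :: nat where "(K * 2 + C) / norm (x - x') < 2^k"
        using real_arch_pow[of 2 "(K * 2 + C) / norm (x - x')"] by auto
      then have "K * 2 + C < 2^k * norm (x - x')" using p by (simp add: divide_less_eq)
      with bnd[of k] show False by linarith
    qed
  qed
  then show ?thesis by blast
qed


lemma near_inj: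
  fixes \<psi> :: "'a \<Rightarrow> 'b::real_normed_vector" and \<epsilon> :: real
  assumes e: "\<epsilon> > 0" and i: "inj (\<iota> :: 'a \<Rightarrow> 'b)"
  shows "\<exists>f::'a \<Rightarrow> 'b. inj f \<and> (\<forall>x. dist (f x) (\<psi> x) < 2 * \<epsilon>)"
proof -
  obtain D :: "'b set" where Dsep: "\<forall>a\<in>D. \<forall>b\<in>D. a \<noteq> b \<longrightarrow> \<epsilon> \<le> dist a b"
    and Dnet: "\<forall>x. \<exists>d\<in>D. dist x d < \<epsilon>"
    using maximal_sep[OF e] by auto
  define \<pi> where "\<pi> y = (SOME d. d \<in> D \<and> dist y d < \<epsilon>)" for y
  have \<pi>: "\<pi> y \<in> D \<and> dist y (\<pi> y) < \<epsilon>" for y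
    unfolding \<pi>_def by (rule someI_ex) (use Dnet in blast)
  define \<beta> where "\<beta> c y = c + ((\<epsilon>/2) / (1 + norm y)) *\<^sub>R y" for c y :: 'b
  have e2: "\<epsilon>/2 > 0" using e by simp
  have \<beta>: "inj (\<beta> c) \<and> (\<forall>y. norm (\<beta> c y - c) < \<epsilon>/2)" for c
    unfolding \<beta>_def using ball_inj[OF e2, of c] by simp
  define f where "f x = \<beta> (\<pi> (\<psi> x)) (\<iota> x)" for x
  have near: "dist (f x) (\<pi> (\<psi> x)) < \<epsilon>/2" for x
    unfolding f_def dist_norm using \<beta> by blast
  have "inj f"
  proof (rule injI)
    fix x x' assume fx: "f x = f x'"
    have "\<pi> (\<psi> x) = \<pi> (\<psi> x')"
    proof (rule ccontr)
      assume ne: "\<pi> (\<psi> x) \<noteq> \<pi> (\<psi> x')"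
      moreover have "\<pi> (\<psi> x) \<in> D" "\<pi> (\<psi> x') \<in> D" using \<pi> by auto
      ultimately have "\<epsilon> \<le> dist (\<pi> (\<psi> x)) (\<pi> (\<psi> x'))" using Dsep by auto
      moreover have "dist (\<pi> (\<psi> x)) (\<pi> (\<psi> x')) \<le> dist (f x) (\<pi> (\<psi> x)) + dist (f x) (\<pi> (\<psi> x'))"
        by (rule dist_triangle3)
      ultimately show False using near[of x] near[of x'] fx by simp
    qed
    then have "\<beta> (\<pi> (\<psi> x)) (\<iota> x) = \<beta> (\<pi> (\<psi> x)) (\<iota> x')" using fx unfolding f_def by simp
    then have "\<iota> x = \<iota> x'" using \<beta> by (meson injD)
    then show "x = x'" using i by (meson injD)
  qed
  moreover have "dist (f x) (\<psi> x) < 2 * \<epsilon>" for x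
  proof -
    have "dist (f x) (\<psi> x) \<le> dist (f x) (\<pi> (\<psi> x)) + dist (\<psi> x) (\<pi> (\<psi> x))"
      by (rule dist_triangle2)
    then show ?thesis using near[of x] \<pi>[of "\<psi> x", THEN conjunct2] e by linarith
  qed
  ultimately show ?thesis by blast
qed



theorem fact3:
  fixes T :: "'a::banach \<Rightarrow> 'b::banach" and M L \<xi> :: real
  assumes "coarse_qi M L T"
    and "\<xi> > 0"
    and "xi_dense \<xi> (range T) UNIV"
  shows "\<exists>T' :: 'a \<Rightarrow> 'b. bij T' \<and> coarse_qi M ((4 * M^2 + 3) * L + 4 * \<xi>) T' \<and>
           (\<forall>x. norm (T' x - T x) \<le> (2 * M^2 + 2) * L + 2 * \<xi>)"
proof -
  have M: "M > 0" and L: "L \<ge> 0"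
    and lo: "\<And>x y. (1 / M) * dist x y - L \<le> dist (T x) (T y)"
    and up: "\<And>x y. dist (T x) (T y) \<le> M * dist x y + L"
    using assms(1) unfolding coarse_qi_def by auto
  have xi: "\<xi> > 0" by (rule assms(2))
  have dense: "\<exists>x. dist y (T x) \<le> \<xi>" for y
    using assms(3) unfolding xi_dense_def by auto
  define G where "G y = (SOME x. dist y (T x) \<le> \<xi>)" for y
  have G: "dist y (T (G y)) \<le> \<xi>" for y
    unfolding G_def by (rule someI_ex) (rule dense)
  have lo': "dist x y \<le> M * dist (T x) (T y) + M * L" for x y
  proof -
    have "M * ((1 / M) * dist x y - L) \<le> M * dist (T x) (T y)"
      using lo[of x y] M by (intro mult_left_mono) auto
    then show ?thesis using M by (simp add: algebra_simps)
  qed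
  obtain \<iota>1 :: "'a \<Rightarrow> 'b" where i1: "inj \<iota>1"
    using coarse_inj[of M T "M * L"] M lo' by blast
  have lo2: "dist y y' \<le> M * dist (G y) (G y') + (L + 2 * \<xi>)" for y y'
  proof -
    have "dist y y' \<le> dist y (T (G y)) + dist (T (G y)) (T (G y')) + dist y' (T (G y'))"
      using dist_triangle[of y y' "T (G y)"] dist_triangle[of "T (G y)" y' "T (G y')"]
        dist_commute[of y' "T (G y')"] by linarith
    also have "\<dots> \<le> \<xi> + (M * dist (G y) (G y') + L) + \<xi>"
      using G[of y] G[of y'] up[of "G y" "G y'"] by linarith
    finally show ?thesis by simp
  qed
  obtain \<iota>2 :: "'b \<Rightarrow> 'a" where i2: "inj \<iota>2"
    using coarse_inj[of M G "L + 2 * \<xi>"] M lo2 by blast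
  define \<epsilon> where "\<epsilon> = \<xi> / (4 * (M + 1))"
  have \<epsilon>: "\<epsilon> > 0" unfolding \<epsilon>_def using xi M by simp
  have \<epsilon>2: "2 * (M + 1) * \<epsilon> = \<xi> / 2" unfolding \<epsilon>_def using M by (simp add: field_simps)
  obtain f :: "'a \<Rightarrow> 'b" where f: "inj f" "\<And>x. dist (f x) (T x) < 2 * \<epsilon>"
    using near_inj[OF \<epsilon> i1, of T] by blast
  obtain g :: "'b \<Rightarrow> 'a" where g: "inj g" "\<And>y. dist (g y) (G y) < 2 * \<epsilon>"
    using near_inj[OF \<epsilon> i2, of G] by blast
  define B where "B = L + 3 / 2 * \<xi>"
  define P where "P x y \<longleftrightarrow> norm (y - T x) \<le> B" for x y
  have Pf: "P x (f x)" for x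
  proof -
    have "2 * \<epsilon> * 1 \<le> 2 * \<epsilon> * (M + 1)" using \<epsilon> M by (intro mult_left_mono) auto
    then have "2 * \<epsilon> \<le> \<xi> / 2" using \<epsilon>2 by (simp add: algebra_simps)
    then show ?thesis using f(2)[of x] L xi unfolding P_def B_def dist_norm by linarith
  qed
  have Pg: "P (g y) y" for y
  proof -
    have "norm (y - T (g y)) \<le> dist y (T (G y)) + dist (T (G y)) (T (g y))"
      using dist_triangle[of y "T (g y)" "T (G y)"] by (simp add: dist_norm)
    also have "\<dots> \<le> \<xi> + (M * dist (G y) (g y) + L)" using G[of y] up[of "G y" "g y"] by linarith
    also have "M * dist (G y) (g y) \<le> M * (2 * \<epsilon>)"
      using g(2)[of y] M by (intro mult_left_mono) (auto simp: dist_commute)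
    also have "M * (2 * \<epsilon>) \<le> \<xi> / 2" using \<epsilon>2 \<epsilon> by (simp add: algebra_simps)
    finally show ?thesis unfolding P_def B_def by simp
  qed
  obtain h where h: "bij h" "\<And>x. P x (h x)" using SB_close[OF f(1) g(1), of P] Pf Pg by blast
  have hn: "norm (h x - T x) \<le> B" for x using h(2)[of x] unfolding P_def .
  have "norm (h x - T x) \<le> (2 * M^2 + 2) * L + 2 * \<xi>" for x
  proof -
    have "0 \<le> 2 * M^2 * L" using L by simp
    moreover have "(2 * M^2 + 2) * L + 2 * \<xi> = 2 * M^2 * L + 2 * L + 2 * \<xi>" by (simp add: algebra_simps)
    ultimately show ?thesis using hn[of x] xi L unfolding B_def by linarith
  qed
  moreover have "coarse_qi M ((4 * M^2 + 3) * L + 4 * \<xi>) h"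
    unfolding coarse_qi_def
  proof (intro conjI allI)
    show "M > 0" by (rule M)
    show "0 \<le> (4 * M^2 + 3) * L + 4 * \<xi>" using L xi by simp
    have m2: "0 \<le> 4 * M^2 * L" using L by simp
    have B2: "2 * B = 2 * L + 3 * \<xi>" unfolding B_def by simp
    have L4: "(4 * M^2 + 3) * L + 4 * \<xi> = 4 * M^2 * L + 3 * L + 4 * \<xi>" by (simp add: algebra_simps)
    fix x y
    have t: "\<bar>dist (h x) (h y) - dist (T x) (T y)\<bar> \<le> 2 * B"
    proof -
      have "dist (h x) (h y) \<le> dist (h x) (T x) + dist (T x) (T y) + dist (T y) (h y)"
        using dist_triangle[of "h x" "h y" "T x"] dist_triangle[of "T x" "h y" "T y"] by linarith
      moreover have "dist (T x) (T y) \<le> dist (T x) (h x) + dist (h x) (h y) + dist (h y) (T y)"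
        using dist_triangle[of "T x" "T y" "h x"] dist_triangle[of "h x" "T y" "h y"] by linarith
      ultimately show ?thesis using hn[of x] hn[of y]
        by (simp add: dist_norm norm_minus_commute abs_le_iff; linarith)
    qed
    show "1 / M * dist x y - ((4 * M^2 + 3) * L + 4 * \<xi>) \<le> dist (h x) (h y)"
      using abs_le_D1[OF t] abs_le_D2[OF t] lo[of x y] m2 L4 xi B2 L4 by linarith
    show "dist (h x) (h y) \<le> M * dist x y + ((4 * M^2 + 3) * L + 4 * \<xi>)"
      using abs_le_D1[OF t] abs_le_D2[OF t] up[of x y] m2 L4 xi B2 L4 by linarith
  next
    show "\<exists>\<xi>'>0. xi_dense \<xi>' (range h) UNIV"
    proof (intro exI conjI)
      show "(1::real) > 0" by simp
      show "xi_dense 1 (range h) UNIV" unfolding xi_dense_def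
        using h(1) bij_is_surj by (metis UNIV_I dist_self zero_le_one)
    qed
  qed
  ultimately show ?thesis using h(1) by blast
qed


end
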